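(* Let $m\ge1$ and $n\ge1$ be integers. For $0\le s\le m-1$ define $$H_{m,s}(q)=\frac{\prod_{j=0}^{s}(1+q^{2m-2j-1})}{(1+q)^{s}(1-q)^{2s}}\sum_{k=0}^{s}\frac{(-1)^{s-k}}{1+q^{2m-2k-1}}\binom{2m-1}{k}\sum_{i=0}^{s-k}\binom{m-s+i-1}{i}\left[\binom{m-k-i-1}{s-k-i}q^{2s-2k-2i}+\binom{m-k-i-2}{s-k-i-1}q^{2s-2k-2i-1}\right].$$ Then each $H_{m,s}(q)$ is a polynomial in $\mathbb{Z}[q]$, and $$T_{2m-1,n}(q)=(-1)^{m+n}H_{m,m-1}(q^{1/2})\frac{q^{mn-\frac n2}}{(1+q^{1/2})^{m}\prod_{i=0}^{m-1}(1+q^{m-i-\frac12})}+\frac{1-q^{n+\frac12}}{1-q^{1/2}}\sum_{k=0}^{m-1}(-1)^k\frac{H_{m,k}(q^{1/2})(1-q^n)^{m-k-1}(1-q^{n+1})^{m-k-1}q^{kn}}{(1-q)^{2m-2k-2}(1+q^{1/2})^{k+1}\prod_{i=0}^{k}(1+q^{m-i-\frac12})}.$$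
   Context: $q$ is an indeterminate and $q^{1/2}$ a fixed formal square root of $q$; identities are identities of rational functions in $q^{1/2}$. For integers $m,n\ge1$, $$T_{m,n}(q)=\sum_{k=1}^{n}(-1)^{n-k}\left(\frac{1-q^k}{1-q}\right)^{m}q^{\frac m2(n-k)}.$$ Binomial coefficients $\binom{a}{b}$ with integers $a,b$ are taken to be $0$ when $b<0$ or when $0\le a<b$. *)

theory Defs
  imports Complex_Main "HOL-Computational_Algebra.Polynomial"
begin

text \<open>Binomial coefficient with integer arguments: 0 if b < 0, generalized
  binomial (a gchoose b) otherwise (which is 0 when 0 \<le> a < b).\<close>
definition binomZ :: "int \<Rightarrow> int \<Rightarrow> real" where
  "binomZ a b = (if b < 0 then 0 else (real_of_int a) gchoose (nat b))"

text \<open>All functions are written in the variable t standing for q^(1/2).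
  Tsq m n t is T_{m,n}(q) with q = t^2.\<close>
definition Tsq :: "nat \<Rightarrow> nat \<Rightarrow> real \<Rightarrow> real" where
  "Tsq m n t = (\<Sum>k=1..n. (-1) ^ (n - k) * ((1 - (t^2) ^ k) / (1 - t^2)) ^ m
                              * t ^ (m * (n - k)))"

definition H :: "nat \<Rightarrow> nat \<Rightarrow> real \<Rightarrow> real" where
  "H m s x =
    (\<Prod>j=0..s. 1 + x ^ (2*m - 2*j - 1)) / ((1 + x) ^ s * (1 - x) ^ (2*s)) *
    (\<Sum>k=0..s. (-1) ^ (s - k) / (1 + x ^ (2*m - 2*k - 1)) * binomZ (2*int m - 1) (int k) *
      (\<Sum>i=0..s-k.
         binomZ (int m - int s + int i - 1) (int i) *
         (binomZ (int m - int k - int i - 1) (int s - int k - int i)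
             * x powi (2*int s - 2*int k - 2*int i)
          + binomZ (int m - int k - int i - 2) (int s - int k - int i - 1)
             * x powi (2*int s - 2*int k - 2*int i - 1))))"

end

theory Submission
  imports Defs "HOL-Computational_Algebra.Formal_Power_Series"
begin

unbundle fps_syntax

definition cc :: "nat \<Rightarrow> nat \<Rightarrow> real" where
  "cc N i = real ((N + i - 1) choose i)"

definition dd :: "real \<Rightarrow> nat \<Rightarrow> nat \<Rightarrow> real" where
  "dd t N K = (\<Sum>i=0..K. cc N i * (cc N (K - i) * (t^2)^(K - i)))"

definition aa :: "real \<Rightarrow> nat \<Rightarrow> nat \<Rightarrow> real" where
  "aa t N K = dd t N K + (if K = 0 then 0 else t * dd t N (K - 1))"

definition FF :: "real \<Rightarrow> nat \<Rightarrow> real fps" where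
  "FF t N = inverse ((1 - fps_const 1 * fps_X) ^ N) * inverse ((1 - fps_const (t^2) * fps_X) ^ N)"

lemma FF_nth: "FF t N $ K = dd t N K"
proof (cases "N = 0")
  case True
  have "cc 0 i = (if i = 0 then 1 else 0)" for i
    by (cases i) (auto simp: cc_def)
  then have "dd t 0 K = (if K = 0 then 1 else 0)"
    unfolding dd_def by (auto intro: sum.neutral)
  then show ?thesis using True by (simp add: FF_def)
next
  case False
  then have pos: "N > 0" by simp
  show ?thesis
    unfolding FF_def dd_def one_minus_const_fps_X_neg_power'[OF pos]
    by (simp add: fps_mult_nth cc_def mult.assoc)
qed

lemma FF_rec: "FF t N = FF t (Suc N) * ((1 - fps_X) * (1 - fps_const (t^2) * fps_X))"
proof -
  define A :: "real fps" where "A = 1 - fps_const 1 * fps_X"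
  define B :: "real fps" where "B = 1 - fps_const (t^2) * fps_X"
  have A0: "A $ 0 \<noteq> 0" and B0: "B $ 0 \<noteq> 0" by (simp_all add: A_def B_def)
  have iA: "inverse A * A = 1" using A0 by (rule inverse_mult_eq_1)
  have iB: "inverse B * B = 1" using B0 by (rule inverse_mult_eq_1)
  have "FF t (Suc N) * (A * B) = inverse A ^ N * inverse B ^ N * ((inverse A * A) * (inverse B * B))"
    unfolding FF_def A_def[symmetric] B_def[symmetric] fps_inverse_power
    by (simp add: algebra_simps)
  also have "\<dots> = FF t N"
    unfolding FF_def A_def[symmetric] B_def[symmetric] fps_inverse_power iA iB by simp
  finally show ?thesis by (simp add: A_def B_def)
qed

lemma aa_fps: "aa t N K = ((1 + fps_const t * fps_X) * FF t N) $ K"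
  by (simp add: aa_def algebra_simps FF_nth)

lemma aa_rec:
  "aa t N K = aa t (Suc N) K - (1 + t^2) * (if K = 0 then 0 else aa t (Suc N) (K - 1))
              + t^2 * (if K < 2 then 0 else aa t (Suc N) (K - 2))"
proof -
  define G where "G = (1 + fps_const t * fps_X) * FF t (Suc N)"
  have "(1 + fps_const t * fps_X) * FF t N = G - fps_const (1 + t^2) * (fps_X * G) + fps_const (t^2) * (fps_X^2 * G)"
  proof -
    have e: "(1 - fps_X) * (1 - fps_const (t^2) * fps_X) = (1::real fps) - fps_const (1+t^2) * fps_X + fps_const (t^2) * fps_X^2"
      by (simp add: algebra_simps power2_eq_square fps_const_add[symmetric] fps_const_mult[symmetric] del: fps_const_add fps_const_mult)
    have "(1 + fps_const t * fps_X) * FF t N = G * ((1 - fps_X) * (1 - fps_const (t^2) * fps_X))"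
      unfolding G_def by (subst FF_rec) (simp only: mult.assoc)
    also have "\<dots> = G - fps_const (1 + t^2) * (fps_X * G) + fps_const (t^2) * (fps_X^2 * G)"
      by (simp only: e) (simp add: algebra_simps)
    finally show ?thesis .
  qed
  then have "aa t N K = (G - fps_const (1 + t^2) * (fps_X * G) + fps_const (t^2) * (fps_X^2 * G)) $ K"
    by (simp add: aa_fps)
  also have "\<dots> = G $ K - (1 + t^2) * (if K = 0 then 0 else G $ (K - 1)) + t^2 * (if K < 2 then 0 else G $ (K - 2))"
    by (simp only: fps_add_nth fps_sub_nth fps_mult_left_const_nth fps_X_mult_nth fps_X_power_mult_nth)
  finally show ?thesis by (simp add: G_def aa_fps)
qed

lemma aa_zero: "aa t 0 K = (if K = 0 then 1 else if K = 1 then t else 0)"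
proof -
  have "cc 0 i = (if i = 0 then 1 else 0)" for i
    by (cases i) (auto simp: cc_def)
  then have d: "dd t 0 K = (if K = 0 then 1 else 0)" for K
    unfolding dd_def by (auto intro: sum.neutral)
  show ?thesis by (simp add: aa_def d)
qed


definition SS :: "real \<Rightarrow> real \<Rightarrow> nat \<Rightarrow> real" where
  "SS t u L = (\<Sum>K\<le>L. aa t (L + 1 - K) K * u^K * ((1 - u) * (1 - t^2 * u))^(L - K))"

lemma aa_rec': "aa t (Suc N) K * w * z = aa t N K * w * z + (1 + t^2) * ((if K = 0 then 0 else aa t (Suc N) (K - 1)) * w * z)
   - t^2 * ((if K < 2 then 0 else aa t (Suc N) (K - 2)) * w * z)"
proof -
  have h: "aa t N K = aa t (Suc N) K - (1 + t^2) * (if K = 0 then 0 else aa t (Suc N) (K - 1))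
              + t^2 * (if K < 2 then 0 else aa t (Suc N) (K - 2))" by (rule aa_rec)
  show ?thesis unfolding h by (simp add: algebra_simps)
qed

lemma SS_rec: "SS t u (Suc (Suc L)) = (1 + t^2 * u^2) * SS t u (Suc L) - t^2 * u^2 * SS t u L"
proof -
  define p where "p = (1 - u) * (1 - t^2 * u)"
  define A where "A K = aa t (L + 2 - K) K * u^K * p^(L + 2 - K)" for K
  define B where "B K = (if K = 0 then 0 else aa t (L + 3 - K) (K - 1)) * u^K * p^(L + 2 - K)" for K
  define C where "C K = (if K < 2 then 0 else aa t (L + 3 - K) (K - 2)) * u^K * p^(L + 2 - K)" for K
  have SSp: "SS t u L' = (\<Sum>K\<le>L'. aa t (L' + 1 - K) K * u^K * p^(L' - K))" for L'
    by (simp add: SS_def p_def)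
  have tw: "aa t (Suc (Suc L) + 1 - K) K * u^K * p^(Suc (Suc L) - K) = A K + (1 + t^2) * B K - t^2 * C K"
    if "K \<le> L + 2" for K
  proof -
    have e1: "Suc (Suc L) + 1 - K = Suc (L + 2 - K)" "L + 3 - K = Suc (L + 2 - K)"
      "Suc (Suc L) - K = L + 2 - K" using that by simp_all
    show ?thesis unfolding A_def B_def C_def e1 by (rule aa_rec')
  qed
  have "SS t u (Suc (Suc L)) = (\<Sum>K\<le>L+2. A K + (1 + t^2) * B K - t^2 * C K)"
    unfolding SSp
  proof (rule sum.cong)
    fix K assume "K \<in> {..L+2}"
    then have "K \<le> L + 2" by simp
    from tw[OF this] show "aa t (Suc (Suc L) + 1 - K) K * u ^ K * p ^ (Suc (Suc L) - K) = A K + (1 + t\<^sup>2) * B K - t\<^sup>2 * C K" .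
  qed simp
  also have "\<dots> = (\<Sum>K\<le>L+2. A K) + (1 + t^2) * (\<Sum>K\<le>L+2. B K) - t^2 * (\<Sum>K\<le>L+2. C K)"
    by (simp only: sum.distrib sum_subtractf sum_distrib_left)
  also have "(\<Sum>K\<le>L+2. A K) = p * SS t u (Suc L)"
  proof -
    have "(\<Sum>K\<le>L+2. A K) = (\<Sum>K\<le>Suc L. A K) + A (L + 2)"
      by (simp add: sum.atMost_Suc)
    also have "A (L + 2) = 0" by (simp add: A_def aa_zero)
    also have "(\<Sum>K\<le>Suc L. A K) = p * SS t u (Suc L)"
      unfolding SSp sum_distrib_left
    proof (rule sum.cong)
      fix K assume "K \<in> {..Suc L}"
      then have K: "K \<le> Suc L" by simp
      then have "L + 2 - K = Suc (Suc L - K)" by simp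
      then show "A K = p * (aa t (Suc L + 1 - K) K * u ^ K * p ^ (Suc L - K))"
        unfolding A_def by (simp add: algebra_simps)
    qed simp
    finally show ?thesis by simp
  qed
  also have "(\<Sum>K\<le>L+2. B K) = u * SS t u (Suc L)"
  proof -
    have "(\<Sum>K\<le>L+2. B K) = B 0 + (\<Sum>K\<le>Suc L. B (Suc K))"
      using sum.atMost_Suc_shift[of B "Suc L"] by simp
    also have "B 0 = 0" by (simp add: B_def)
    also have "(\<Sum>K\<le>Suc L. B (Suc K)) = u * SS t u (Suc L)"
      unfolding SSp sum_distrib_left
    proof (rule sum.cong)
      fix K assume "K \<in> {..Suc L}"
      then have K: "K \<le> Suc L" by simp
      then have "L + 3 - Suc K = Suc L + 1 - K" "L + 2 - Suc K = Suc L - K" by simp_all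
      then show "B (Suc K) = u * (aa t (Suc L + 1 - K) K * u ^ K * p ^ (Suc L - K))"
        unfolding B_def by (simp add: algebra_simps)
    qed simp
    finally show ?thesis by simp
  qed
  also have "(\<Sum>K\<le>L+2. C K) = u^2 * SS t u L"
  proof -
    have "(\<Sum>K\<le>L+2. C K) = C 0 + (C 1 + (\<Sum>K\<le>L. C (Suc (Suc K))))"
      using sum.atMost_Suc_shift[of C "Suc L"] sum.atMost_Suc_shift[of "\<lambda>K. C (Suc K)" L] by simp
    also have "C 0 = 0" by (simp add: C_def)
    also have "C 1 = 0" by (simp add: C_def)
    also have "(\<Sum>K\<le>L. C (Suc (Suc K))) = u^2 * SS t u L"
      unfolding SSp sum_distrib_left
    proof (rule sum.cong)
      fix K assume "K \<in> {..L}"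
      then have K: "K \<le> L" by simp
      then have "L + 3 - Suc (Suc K) = L + 1 - K" "L + 2 - Suc (Suc K) = L - K" by simp_all
      then show "C (Suc (Suc K)) = u^2 * (aa t (L + 1 - K) K * u ^ K * p ^ (L - K))"
        unfolding C_def by (simp add: algebra_simps power2_eq_square)
    qed simp
    finally show ?thesis by simp
  qed
  finally show ?thesis unfolding p_def by (simp add: algebra_simps power2_eq_square)
qed

lemma SS_0: "SS t u 0 = 1"
  by (simp add: SS_def aa_def dd_def cc_def)

lemma SS_1: "SS t u (Suc 0) = 1 + t * u + t^2 * u^2"
  by (simp add: SS_def aa_def dd_def cc_def algebra_simps power2_eq_square)

lemma SS_closed: "SS t u L = (\<Sum>i\<le>2*L. (t*u)^i)"
proof -
  have "SS t u L = (\<Sum>i\<le>2*L. (t*u)^i) \<and> SS t u (Suc L) = (\<Sum>i\<le>2*Suc L. (t*u)^i)"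
  proof (induction L)
    case 0
    then show ?case by (simp add: SS_0 SS_1 numeral_2_eq_2 algebra_simps power2_eq_square)
  next
    case (Suc L)
    have e: "2 * Suc (Suc L) = Suc (Suc (2 * Suc L))" "2 * Suc L = Suc (Suc (2 * L))" by simp_all
    show ?case using Suc SS_rec[of t u L] unfolding e
      by (simp add: algebra_simps power2_eq_square)
  qed
  then show ?thesis by simp
qed


lemma odd_pow_ne: fixes t :: real assumes "odd n" "t \<noteq> -1" shows "1 + t^n \<noteq> 0"
proof
  assume h: "1 + t^n = 0"
  show False
  proof (cases "t \<ge> 0")
    case True
    then have "t^n \<ge> 0" by simp
    with h show False by simp
  next
    case False
    have "(-t)^n = 1" using h assms(1) by simp
    then have "(-t)^Suc (n - 1) = 1^Suc (n-1)" using odd_pos[OF assms(1)] by simp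
    then have "-t = 1" by (rule power_inject_base) (use False in auto)
    with assms show False by simp
  qed
qed

definition PP :: "nat \<Rightarrow> real \<Rightarrow> nat \<Rightarrow> real" where
  "PP m t j = (-1)^j * real ((2*m-1) choose j) / ((1 + t^(2*m-1-2*j)) * (1 - t^2)^(2*m-1))"

definition EE :: "nat \<Rightarrow> real \<Rightarrow> nat \<Rightarrow> real \<Rightarrow> real" where
  "EE m t j u = u^j - t^(2*m-1-2*j) * u^(2*m-1-j)"

definition BB :: "nat \<Rightarrow> real \<Rightarrow> nat \<Rightarrow> real \<Rightarrow> real" where
  "BB m t k u = (1 - t*u) * u^k * ((1 - u) * (1 - t^2*u))^(m-1-k)"

definition ck :: "nat \<Rightarrow> real \<Rightarrow> nat \<Rightarrow> real" where
  "ck m t k = (\<Sum>j\<le>k. PP m t j * aa t (m-k) (k-j))"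

lemma E_lemma:
  assumes "j < m"
  shows "(\<Sum>k\<in>{j..<m}. aa t (m-k) (k-j) * BB m t k u) = EE m t j u"
proof -
  define L where "L = m - 1 - j"
  have img: "{j..<m} = (\<lambda>K. j + K) ` {..L}"
  proof
    show "{j..<m} \<subseteq> (\<lambda>K. j + K) ` {..L}"
    proof
      fix x assume "x \<in> {j..<m}"
      then have "x = j + (x - j)" "x - j \<in> {..L}" by (auto simp: L_def)
      then show "x \<in> (\<lambda>K. j + K) ` {..L}" by blast
    qed
    show "(\<lambda>K. j + K) ` {..L} \<subseteq> {j..<m}" using assms by (auto simp: L_def)
  qed
  have "(\<Sum>k\<in>{j..<m}. aa t (m-k) (k-j) * BB m t k u) = (\<Sum>K\<le>L. aa t (m-(j+K)) K * BB m t (j+K) u)"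
    unfolding img by (subst sum.reindex) (auto simp: inj_on_def)
  also have "\<dots> = (1 - t*u) * u^j * SS t u L"
    unfolding SS_def sum_distrib_left
  proof (rule sum.cong)
    fix K assume "K \<in> {..L}"
    then have K: "K \<le> L" by simp
    then have e: "m - (j+K) = L + 1 - K" "m - 1 - (j + K) = L - K" using assms by (auto simp: L_def)
    show "aa t (m-(j+K)) K * BB m t (j+K) u = (1 - t*u) * u^j * (aa t (L + 1 - K) K * u ^ K * ((1 - u) * (1 - t\<^sup>2 * u)) ^ (L - K))"
      unfolding BB_def e by (simp add: power_add algebra_simps)
  qed simp
  also have "\<dots> = u^j * (1 - (t*u)^(Suc (2*L)))"
  proof -
    have g: "(1 - t*u) * SS t u L = 1 - (t*u)^(Suc (2*L))"
      unfolding SS_closed by (rule sum_gp_basic)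
    have "(1 - t*u) * u^j * SS t u L = u^j * ((1 - t*u) * SS t u L)" by (simp add: algebra_simps)
    then show ?thesis unfolding g .
  qed
  also have "\<dots> = EE m t j u"
  proof -
    have "2*m-1-2*j = Suc (2*L)" "2*m-1-j = j + Suc (2*L)" using assms by (auto simp: L_def)
    then show ?thesis unfolding EE_def by (simp add: power_mult_distrib power_add algebra_simps)
  qed
  finally show ?thesis .
qed

lemma swap_lemma:
  "(\<Sum>k<m. ck m t k * BB m t k u) = (\<Sum>j<m. PP m t j * EE m t j u)"
proof -
  have "(\<Sum>k<m. ck m t k * BB m t k u) = (\<Sum>k<m. \<Sum>j\<in>{j. j \<in> {..<m} \<and> j \<le> k}. PP m t j * aa t (m-k) (k-j) * BB m t k u)"
  proof (rule sum.cong)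
    fix k assume "k \<in> {..<m}"
    then have "{j. j \<in> {..<m} \<and> j \<le> k} = {..k}" by auto
    then show "ck m t k * BB m t k u = (\<Sum>j\<in>{j. j \<in> {..<m} \<and> j \<le> k}. PP m t j * aa t (m-k) (k-j) * BB m t k u)"
      unfolding ck_def by (simp add: sum_distrib_right)
  qed simp
  also have "\<dots> = (\<Sum>j<m. \<Sum>k\<in>{k. k \<in> {..<m} \<and> j \<le> k}. PP m t j * aa t (m-k) (k-j) * BB m t k u)"
    by (rule sum.swap_restrict) auto
  also have "\<dots> = (\<Sum>j<m. PP m t j * EE m t j u)"
  proof (rule sum.cong)
    fix j assume j: "j \<in> {..<m}"
    then have "{k. k \<in> {..<m} \<and> j \<le> k} = {j..<m}" by auto
    then show "(\<Sum>k\<in>{k. k \<in> {..<m} \<and> j \<le> k}. PP m t j * aa t (m-k) (k-j) * BB m t k u) = PP m t j * EE m t j u"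
      using E_lemma[of j m t u] j by (simp add: sum_distrib_left[symmetric] mult.assoc)
  qed simp
  finally show ?thesis .
qed

lemma sum_sym_split:
  fixes f :: "nat \<Rightarrow> real"
  shows "(\<Sum>k<2*m. f k) = (\<Sum>k<m. f k + f (2*m - 1 - k))"
proof -
  have "(\<Sum>k<2*m. f k) = (\<Sum>k\<in>{0..<m}. f k) + (\<Sum>k\<in>{m..<2*m}. f k)"
    by (simp add: sum.atLeastLessThan_concat atLeast0LessThan[symmetric])
  also have "(\<Sum>k\<in>{m..<2*m}. f k) = (\<Sum>k<m. f (2*m-1-k))"
    by (rule sum.reindex_bij_witness[where i="\<lambda>k. 2*m-1-k" and j="\<lambda>k. 2*m-1-k"]) auto
  finally show ?thesis by (simp add: sum.distrib atLeast0LessThan)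
qed

lemma EE_step:
  assumes "j < m"
  shows "EE m t j (t^2 * v) + t^(2*m-1) * EE m t j v
       = (1 + t^(2*m-1-2*j)) * ((t^2*v)^j - (t^2*v)^(2*m-1-j))"
proof -
  have e1: "t^(2*m-1) = t^(2*m-1-2*j) * (t^2)^j"
    using assms by (simp add: power_mult[symmetric] power_add[symmetric])
  have e2: "(t^2)^(2*m-1-j) = t^(2*m-1-2*j) * t^(2*m-1)"
    using assms by (simp add: power_mult[symmetric] power_add[symmetric] mult_2)
  have gen: "Q*x - A*(R*y) + T*(x - A*y) = (1+A)*(Q*x - R*y)" if "T = A*Q" "R = A*T"
    for Q x A R y T :: real using that by (simp add: algebra_simps)
  show ?thesis unfolding EE_def power_mult_distrib
    by (rule gen[OF e1 e2])
qed

lemma gen2: "a \<noteq> 0 \<Longrightarrow> c / (a * D) * (a * Y) = c * Y / (D::real)"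
  by (cases "D = 0") (simp_all add: field_simps)

lemma P_step:
  assumes "m \<ge> 1" "t \<noteq> 1" "t \<noteq> -1"
  shows "(\<Sum>j<m. PP m t j * (EE m t j (t^2 * v) + t^(2*m-1) * EE m t j v))
        = ((1 - t^2 * v) / (1 - t^2))^(2*m-1)"
proof -
  define w where "w = t^2 * v"
  have q0: "1 - t^2 \<noteq> 0" using assms by (auto simp: power2_eq_1_iff)
  have "(\<Sum>j<m. PP m t j * (EE m t j (t^2 * v) + t^(2*m-1) * EE m t j v))
      = (\<Sum>j<m. (-1)^j * real ((2*m-1) choose j) * (w^j - w^(2*m-1-j))) / (1 - t^2)^(2*m-1)"
    unfolding sum_divide_distrib
  proof (rule sum.cong)
    fix j assume "j \<in> {..<m}"
    then have j: "j < m" by simp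
    have ne: "1 + t^(2*m-1-2*j) \<noteq> 0" using odd_pow_ne[of "2*m-1-2*j" t] assms j by auto
    show "PP m t j * (EE m t j (t^2 * v) + t^(2*m-1) * EE m t j v) =
          (-1)^j * real ((2*m-1) choose j) * (w^j - w^(2*m-1-j)) / (1 - t^2)^(2*m-1)"
    proof -
      have "PP m t j * (EE m t j (t^2 * v) + t^(2*m-1) * EE m t j v) = PP m t j * ((1 + t^(2*m-1-2*j)) * (w^j - w^(2*m-1-j)))"
        using EE_step[OF j, of t v] by (simp add: w_def)
      also have "\<dots> = (-1)^j * real ((2*m-1) choose j) * (w^j - w^(2*m-1-j)) / (1 - t^2)^(2*m-1)"
        unfolding PP_def by (rule gen2[OF ne])
      finally show ?thesis .
    qed
  qed simp
  also have "(\<Sum>j<m. (-1)^j * real ((2*m-1) choose j) * (w^j - w^(2*m-1-j))) = (1 - w)^(2*m-1)"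
  proof -
    define f where "f j = real ((2*m-1) choose j) * (-w)^j" for j
    have "(1 - w)^(2*m-1) = (\<Sum>j\<le>2*m-1. f j)"
      unfolding f_def using binomial_ring[of "-w" 1 "2*m-1"] by (simp add: algebra_simps)
    also have "{..2*m-1} = {..<2*m}" using assms by auto
    also have "(\<Sum>j<2*m. f j) = (\<Sum>j<m. f j + f (2*m-1-j))" by (rule sum_sym_split)
    also have "\<dots> = (\<Sum>j<m. (-1)^j * real ((2*m-1) choose j) * (w^j - w^(2*m-1-j)))"
    proof (rule sum.cong)
      fix j assume "j \<in> {..<m}"
      then have j: "j < m" by simp
      have c: "(2*m-1) choose (2*m-1-j) = (2*m-1) choose j"
        using j by (intro binomial_symmetric[symmetric]) auto
      have o: "(-1::real)^(2*m-1-j) = - ((-1)^j)"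
      proof -
        have "2*m-1-j = Suc (2*(m-1-j)) + j" using j by auto
        then show ?thesis by (simp add: power_add)
      qed
      show "f j + f (2*m-1-j) = (-1)^j * real ((2*m-1) choose j) * (w^j - w^(2*m-1-j))"
        unfolding f_def c power_minus[of w] o by (simp add: algebra_simps)
    qed simp
    finally show ?thesis by simp
  qed
  finally show ?thesis using q0 by (simp add: w_def power_divide)
qed


lemma binomZ_nat: "binomZ (int a) (int b) = real (a choose b)"
  by (simp add: binomZ_def binomial_gbinomial)

lemma binomZ_neg: "b < 0 \<Longrightarrow> binomZ a b = 0"
  by (simp add: binomZ_def)

lemma inner_eq:
  assumes "k \<le> s" "s < m"
  shows "(\<Sum>i=0..s-k.
         binomZ (int m - int s + int i - 1) (int i) *
         (binomZ (int m - int k - int i - 1) (int s - int k - int i)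
             * t powi (2*int s - 2*int k - 2*int i)
          + binomZ (int m - int k - int i - 2) (int s - int k - int i - 1)
             * t powi (2*int s - 2*int k - 2*int i - 1))) = aa t (m-s) (s-k)"
proof -
  define N where "N = m - s"
  define K where "K = s - k"
  have N1: "N \<ge> 1" using assms by (simp add: N_def)
  have summand: "binomZ (int m - int s + int i - 1) (int i) *
         (binomZ (int m - int k - int i - 1) (int s - int k - int i)
             * t powi (2*int s - 2*int k - 2*int i)
          + binomZ (int m - int k - int i - 2) (int s - int k - int i - 1)
             * t powi (2*int s - 2*int k - 2*int i - 1))
      = cc N i * (cc N (K - i) * (t^2)^(K - i)) +
        (if K - i = 0 then 0 else t * (cc N i * (cc N (K - i - 1) * (t^2)^(K - i - 1))))"
    if i: "i \<in> {0..s-k}" for i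
  proof -
    have iK: "i \<le> K" using i by (simp add: K_def)
    have a1: "int m - int s + int i - 1 = int (N + i - 1)" using N1 assms by (simp add: N_def)
    have a2: "int m - int k - int i - 1 = int (N + (K - i) - 1)" "int s - int k - int i = int (K - i)"
      using N1 assms iK by (simp_all add: N_def K_def)
    have a3: "2*int s - 2*int k - 2*int i = int (2 * (K - i))" using assms iK by (simp add: K_def)
    have c1: "binomZ (int m - int s + int i - 1) (int i) = cc N i"
      unfolding a1 binomZ_nat cc_def by simp
    have c2: "binomZ (int m - int k - int i - 1) (int s - int k - int i) = cc N (K - i)"
      unfolding a2 binomZ_nat cc_def by simp
    have c3: "t powi (2*int s - 2*int k - 2*int i) = (t^2)^(K - i)"
      unfolding a3 power_int_of_nat by (simp add: power_mult)
    have c4: "binomZ (int m - int k - int i - 2) (int s - int k - int i - 1)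
             * t powi (2*int s - 2*int k - 2*int i - 1)
          = (if K - i = 0 then 0 else t * (cc N (K - i - 1) * (t^2)^(K - i - 1)))"
    proof (cases "K - i = 0")
      case True
      then have "int s - int k - int i - 1 < 0" using assms iK by (simp add: K_def)
      then show ?thesis using True by (simp add: binomZ_neg)
    next
      case False
      have b1: "int m - int k - int i - 2 = int (N + (K - i - 1) - 1)" "int s - int k - int i - 1 = int (K - i - 1)"
        using N1 assms iK False by (simp_all add: N_def K_def)
      have b2: "2*int s - 2*int k - 2*int i - 1 = int (Suc (2 * (K - i - 1)))"
        using assms iK False by (simp add: K_def)
      show ?thesis using False unfolding b1 b2 binomZ_nat power_int_of_nat cc_def
        by (simp add: power_mult)
    qed
    show ?thesis unfolding c1 c2 c3 distrib_left c4 by (simp add: algebra_simps)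
  qed
  have "(\<Sum>i=0..s-k. binomZ (int m - int s + int i - 1) (int i) *
         (binomZ (int m - int k - int i - 1) (int s - int k - int i)
             * t powi (2*int s - 2*int k - 2*int i)
          + binomZ (int m - int k - int i - 2) (int s - int k - int i - 1)
             * t powi (2*int s - 2*int k - 2*int i - 1)))
      = (\<Sum>i=0..K. cc N i * (cc N (K - i) * (t^2)^(K - i)) +
        (if K - i = 0 then 0 else t * (cc N i * (cc N (K - i - 1) * (t^2)^(K - i - 1)))))"
    using summand by (intro sum.cong) (auto simp: K_def)
  also have "\<dots> = dd t N K + (\<Sum>i=0..K. (if K - i = 0 then 0 else t * (cc N i * (cc N (K - i - 1) * (t^2)^(K - i - 1)))))"
    by (simp add: sum.distrib dd_def)
  also have "(\<Sum>i=0..K. (if K - i = 0 then 0 else t * (cc N i * (cc N (K - i - 1) * (t^2)^(K - i - 1)))))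
     = (if K = 0 then 0 else t * dd t N (K - 1))"
  proof (cases K)
    case 0
    then show ?thesis by simp
  next
    case (Suc K')
    have "(\<Sum>i=0..Suc K'. (if Suc K' - i = 0 then 0 else t * (cc N i * (cc N (Suc K' - i - 1) * (t^2)^(Suc K' - i - 1)))))
       = (\<Sum>i=0..K'. t * (cc N i * (cc N (K' - i) * (t^2)^(K' - i))))"
      by (simp add: sum.atLeast0_atMost_Suc Suc_diff_le)
    then show ?thesis using Suc by (simp add: dd_def sum_distrib_left)
  qed
  finally show ?thesis by (simp add: aa_def N_def K_def)
qed

lemma H_eq:
  assumes "s < m"
  shows "H m s t = (\<Prod>j=0..s. 1 + t ^ (2*m - 2*j - 1)) / ((1 + t) ^ s * (1 - t) ^ (2*s)) *
    (\<Sum>k=0..s. (-1) ^ (s - k) / (1 + t ^ (2*m - 2*k - 1)) * real ((2*m-1) choose k) * aa t (m-s) (s-k))"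
proof -
  have b: "binomZ (2*int m - 1) (int k) = real ((2*m-1) choose k)" for k
  proof -
    have "2*int m - 1 = int (2*m-1)" using assms by simp
    then show ?thesis by (simp only: binomZ_nat)
  qed
  have eq: "(-1) ^ (s - k) / (1 + t ^ (2*m - 2*k - 1)) * binomZ (2*int m - 1) (int k) *
      (\<Sum>i=0..s-k.
         binomZ (int m - int s + int i - 1) (int i) *
         (binomZ (int m - int k - int i - 1) (int s - int k - int i)
             * t powi (2*int s - 2*int k - 2*int i)
          + binomZ (int m - int k - int i - 2) (int s - int k - int i - 1)
             * t powi (2*int s - 2*int k - 2*int i - 1))) = (-1) ^ (s - k) / (1 + t ^ (2*m - 2*k - 1)) * real ((2*m-1) choose k) * aa t (m-s) (s-k)" if "k \<in> {0..s}" for k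
  proof -
    from that have "k \<le> s" by simp
    show ?thesis unfolding b inner_eq[OF \<open>k \<le> s\<close> assms] ..
  qed
  have S: "(\<Sum>k=0..s. (-1) ^ (s - k) / (1 + t ^ (2*m - 2*k - 1)) * binomZ (2*int m - 1) (int k) *
      (\<Sum>i=0..s-k.
         binomZ (int m - int s + int i - 1) (int i) *
         (binomZ (int m - int k - int i - 1) (int s - int k - int i)
             * t powi (2*int s - 2*int k - 2*int i)
          + binomZ (int m - int k - int i - 2) (int s - int k - int i - 1)
             * t powi (2*int s - 2*int k - 2*int i - 1)))) = (\<Sum>k=0..s. (-1) ^ (s - k) / (1 + t ^ (2*m - 2*k - 1)) * real ((2*m-1) choose k) * aa t (m-s) (s-k))"
    by (rule sum.cong[OF refl eq])
  show ?thesis unfolding H_def S ..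
qed


lemma prod_odd_ne:
  assumes "k < m" "t \<noteq> -1"
  shows "(\<Prod>i=0..k. 1 + t ^ (2*m - 2*i - 1)) \<noteq> (0::real)"
proof -
  have "1 + t ^ (2*m - 2*i - 1) \<noteq> 0" if "i \<in> {0..k}" for i
  proof -
    have "odd (2*m - 2*i - 1)" using that assms by auto
    then show ?thesis using odd_pow_ne assms(2) by blast
  qed
  then show ?thesis by (simp add: prod_zero_iff)
qed

lemma gen3: "(x::real) * c / a * y / D = x * c / (a * D) * y"
  by (cases "a=0"; cases "D=0") (simp_all add: field_simps)

lemma ck_H:
  assumes "k < m" "t \<noteq> 1" "t \<noteq> -1"
  shows "(-1)^k * H m k t / ((1 - t^2)^(2*m - 2*k - 2) * (1+t)^(k+1) * (\<Prod>i=0..k. 1 + t^(2*m - 2*i - 1))) / (1 - t)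
       = ck m t k"
proof -
  define Pr where "Pr = (\<Prod>i=0..k. 1 + t^(2*m - 2*i - 1))"
  define S where "S = (\<Sum>j=0..k. (-1) ^ (k - j) / (1 + t ^ (2*m - 2*j - 1)) * real ((2*m-1) choose j) * aa t (m-k) (k-j))"
  define E where "E = (1 + t) ^ k * (1 - t) ^ (2*k)"
  define D where "D = (1 - t^2)^(2*m - 2*k - 2) * (1+t)^(k+1)"
  have Pr0: "Pr \<noteq> 0" unfolding Pr_def by (rule prod_odd_ne[OF assms(1,3)])
  have den: "E * D * (1 - t) = (1 - t^2)^(2*m-1)"
  proof -
    have e: "2*m-1 = Suc (2*k) + (2*m - 2*k - 2)" using assms by auto
    have "(1 - t^2)^(2*m-1) = ((1-t)*(1+t))^Suc (2*k) * (1 - t^2)^(2*m - 2*k - 2)"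
      unfolding e power_add by (simp add: power2_eq_square algebra_simps)
    also have "\<dots> = E * D * (1 - t)"
    proof -
      have p: "(1+t)^(2*k) = (1+t)^k*(1+t)^k" by (simp add: power_add[symmetric] mult_2)
      show ?thesis unfolding E_def D_def power_mult_distrib power_Suc p by (simp add: algebra_simps)
    qed
    finally show ?thesis by simp
  qed
  have "(-1)^k * H m k t / (D * Pr) / (1 - t) = (-1)^k * (Pr / E * S) / (D * Pr) / (1 - t)"
    unfolding H_eq[OF assms(1)] Pr_def E_def S_def by simp
  also have "\<dots> = (-1)^k * S / (E * D * (1 - t))"
    using Pr0 by (simp add: field_simps)
  also have "\<dots> = (-1)^k * S / (1 - t^2)^(2*m-1)" unfolding den ..
  also have "\<dots> = ck m t k"
  proof -
    have "(-1)^k * S = (\<Sum>j\<le>k. (-1)^j * real ((2*m-1) choose j) / (1 + t^(2*m-1-2*j)) * aa t (m-k) (k-j))"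
      unfolding S_def sum_distrib_left atLeast0AtMost
    proof (rule sum.cong)
      fix j assume "j \<in> {..k}"
      then have j: "j \<le> k" by simp
      have sg: "(-1::real)^k * (-1)^(k-j) = (-1)^j"
      proof -
        have "k = j + (k - j)" using j by simp
        then have "(-1::real)^k * (-1)^(k-j) = (-1)^j * ((-1)^(k-j) * (-1)^(k-j))"
          by (metis power_add mult.assoc)
        also have "\<dots> = (-1)^j" by (simp flip: power_add)
        finally show ?thesis .
      qed
      have ex: "2*m - 2*j - 1 = 2*m-1-2*j" by simp
      show "(-1)^k * ((-1) ^ (k - j) / (1 + t ^ (2*m - 2*j - 1)) * real ((2*m-1) choose j) * aa t (m-k) (k-j))
         = (-1)^j * real ((2*m-1) choose j) / (1 + t^(2*m-1-2*j)) * aa t (m-k) (k-j)"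
        unfolding ex using sg by (simp add: field_simps)
    qed simp
    then have "(-1)^k * S / (1 - t^2)^(2*m-1) = (\<Sum>j\<le>k. (-1)^j * real ((2*m-1) choose j) / (1 + t^(2*m-1-2*j)) * aa t (m-k) (k-j) / (1 - t^2)^(2*m-1))"
      by (simp add: sum_divide_distrib)
    also have "\<dots> = ck m t k" unfolding ck_def PP_def
      by (intro sum.cong refl) (rule gen3)
    finally show ?thesis .
  qed
  finally show ?thesis unfolding D_def Pr_def by simp
qed


definition hom :: "nat \<Rightarrow> nat \<Rightarrow> real \<Rightarrow> real" where
  "hom m n t = (-1) ^ (m + n) * H m (m - 1) t * t ^ (2*m*n - n)
              / ((1 + t) ^ m * (\<Prod>i=0..m-1. 1 + t ^ (2*m - 2*i - 1)))"

lemma Tsq_0: "Tsq M 0 t = 0" by (simp add: Tsq_def)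

lemma Tsq_Suc: "Tsq M (Suc n) t = ((1 - (t^2)^(Suc n)) / (1 - t^2))^M - t^M * Tsq M n t"
proof -
  have "Tsq M (Suc n) t = (\<Sum>k=1..n. (-1) ^ (Suc n - k) * ((1 - (t^2) ^ k) / (1 - t^2)) ^ M
                              * t ^ (M * (Suc n - k))) + ((1 - (t^2)^(Suc n)) / (1 - t^2))^M"
    unfolding Tsq_def by (simp add: sum.cl_ivl_Suc)
  also have "(\<Sum>k=1..n. (-1) ^ (Suc n - k) * ((1 - (t^2) ^ k) / (1 - t^2)) ^ M * t ^ (M * (Suc n - k)))
      = - (t^M) * Tsq M n t"
    unfolding Tsq_def sum_distrib_left
  proof (rule sum.cong)
    fix k assume "k \<in> {1..n}"
    then have "Suc n - k = Suc (n - k)" by auto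
    then show "(-1) ^ (Suc n - k) * ((1 - (t^2) ^ k) / (1 - t^2)) ^ M * t ^ (M * (Suc n - k))
       = - (t^M) * ((-1) ^ (n - k) * ((1 - (t^2) ^ k) / (1 - t^2)) ^ M * t ^ (M * (n - k)))"
      by (simp add: power_add algebra_simps)
  qed simp
  finally show ?thesis by simp
qed

lemma gen4: "(A / (b::real)) * (s * h * X * Y * Z / D) = (s * h / D / b) * (A * X * Y * Z)"
  by (simp add: field_simps)

lemma RHS_eq:
  assumes "m \<ge> 1" "t \<noteq> 1" "t \<noteq> -1"
  shows "(1 - t ^ (2*n + 1)) / (1 - t) *
            (\<Sum>k=0..m-1. (-1) ^ k * H m k t * (1 - (t^2) ^ n) ^ (m - k - 1)
                 * (1 - (t^2) ^ (n + 1)) ^ (m - k - 1) * (t^2) ^ (k * n)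
               / ((1 - t^2) ^ (2*m - 2*k - 2) * (1 + t) ^ (k + 1)
                  * (\<Prod>i=0..k. 1 + t ^ (2*m - 2*i - 1))))
       = (\<Sum>k<m. ck m t k * BB m t k ((t^2)^n))"
proof -
  have I: "{0..m-1} = {..<m}" using assms by auto
  show ?thesis unfolding sum_distrib_left I
  proof (rule sum.cong)
    fix k assume "k \<in> {..<m}"
    then have k: "k < m" by simp
    have B: "BB m t k ((t^2)^n) = (1 - t ^ (2*n + 1)) * (1 - (t^2) ^ n) ^ (m - k - 1)
                 * (1 - (t^2) ^ (n + 1)) ^ (m - k - 1) * (t^2) ^ (k * n)"
      unfolding BB_def power_mult_distrib
      by (simp add: power_mult[symmetric] power_add[symmetric] mult.commute[of n k] algebra_simps)
    show "(1 - t ^ (2*n + 1)) / (1 - t) *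
            ((-1) ^ k * H m k t * (1 - (t^2) ^ n) ^ (m - k - 1)
                 * (1 - (t^2) ^ (n + 1)) ^ (m - k - 1) * (t^2) ^ (k * n)
               / ((1 - t^2) ^ (2*m - 2*k - 2) * (1 + t) ^ (k + 1)
                  * (\<Prod>i=0..k. 1 + t ^ (2*m - 2*i - 1))))
          = ck m t k * BB m t k ((t^2)^n)"
      unfolding gen4 ck_H[OF k assms(2,3)] B ..
  qed simp
qed

lemma main_ident:
  assumes "m \<ge> 1" "t \<noteq> 1" "t \<noteq> -1"
  shows "Tsq (2*m - 1) n t = hom m n t + (\<Sum>k<m. ck m t k * BB m t k ((t^2)^n))"
proof (induction n)
  case 0
  obtain m' where m: "m = Suc m'" using assms(1) by (cases m) auto
  have "(\<Sum>k<m. ck m t k * BB m t k ((t^2)^0)) = ck m t m' * (1 - t)"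
  proof -
    have "(\<Sum>k<m'. ck m t k * BB m t k ((t^2)^0)) = 0"
      by (rule sum.neutral) (auto simp: BB_def m)
    then show ?thesis unfolding m by (simp add: BB_def)
  qed
  also have "ck m t m' * (1 - t) = (-1)^m' * H m m' t / ((1+t)^m * (\<Prod>i=0..m'. 1 + t^(2*m - 2*i - 1)))"
  proof -
    have t1: "1 - t \<noteq> 0" using assms by simp
    have "ck m t m' = (-1)^m' * H m m' t / ((1 - t^2)^(2*m - 2*m' - 2) * (1+t)^(m'+1) * (\<Prod>i=0..m'. 1 + t^(2*m - 2*i - 1))) / (1 - t)"
      using ck_H[of m' m t] assms m by simp
    then show ?thesis using t1 m by simp
  qed
  finally show ?case unfolding hom_def Tsq_0 using m by (simp add: field_simps)
next
  case (Suc n)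
  define M where "M = 2*m - 1"
  have hs: "hom m (Suc n) t = - (t^M) * hom m n t"
  proof -
    have e: "2*m*Suc n - Suc n = (2*m*n - n) + M" using assms by (simp add: M_def algebra_simps)
    show ?thesis unfolding hom_def e by (simp add: power_add)
  qed
  have ps: "(\<Sum>k<m. ck m t k * BB m t k ((t^2)^Suc n)) = ((1 - (t^2)^(Suc n)) / (1 - t^2))^M - t^M * (\<Sum>k<m. ck m t k * BB m t k ((t^2)^n))"
  proof -
    have "(\<Sum>j<m. PP m t j * (EE m t j (t^2 * (t^2)^n) + t^(2*m-1) * EE m t j ((t^2)^n)))
        = ((1 - t^2 * (t^2)^n) / (1 - t^2))^(2*m-1)" by (rule P_step[OF assms])
    then show ?thesis unfolding swap_lemma M_def
      by (simp add: algebra_simps sum.distrib sum_distrib_left)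
  qed
  show ?case unfolding Tsq_Suc Suc[folded M_def] hs ps M_def[symmetric] by (simp add: algebra_simps)
qed


lemma mpi_add: "map_poly (of_int :: int \<Rightarrow> real) (p + q) = map_poly of_int p + map_poly of_int q"
  by (rule poly_eqI) (simp add: coeff_map_poly)

lemma mpi_mult: "map_poly (of_int :: int \<Rightarrow> real) (p * q) = map_poly of_int p * map_poly of_int q"
  by (rule poly_eqI) (simp add: coeff_map_poly coeff_mult)

definition ip :: "(real \<Rightarrow> real) \<Rightarrow> bool" where
  "ip f \<longleftrightarrow> (\<exists>p::int poly. \<forall>x. f x = poly (map_poly of_int p) x)"

lemma ip_const: "ip (\<lambda>x. of_int c)"
  unfolding ip_def by (rule exI[of _ "[:c:]"]) (simp add: map_poly_pCons)

lemma ip_const_nat: "ip (\<lambda>x. real c)"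
  using ip_const[of "int c"] by simp

lemma ip_id: "ip (\<lambda>x. x)"
  unfolding ip_def by (rule exI[of _ "[:0,1:]"]) (simp add: map_poly_pCons)

lemma ip_add: "ip f \<Longrightarrow> ip g \<Longrightarrow> ip (\<lambda>x. f x + g x)"
  unfolding ip_def by (metis mpi_add poly_add)

lemma ip_mult: "ip f \<Longrightarrow> ip g \<Longrightarrow> ip (\<lambda>x. f x * g x)"
  unfolding ip_def by (metis mpi_mult poly_mult)

lemma ip_minus: "ip f \<Longrightarrow> ip (\<lambda>x. - f x)"
  using ip_mult[OF ip_const[of "-1"]] by simp

lemma ip_diff: "ip f \<Longrightarrow> ip g \<Longrightarrow> ip (\<lambda>x. f x - g x)"
  using ip_add[OF _ ip_minus] by simp

lemma ip_power: "ip f \<Longrightarrow> ip (\<lambda>x. f x ^ n)"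
proof (induction n)
  case 0
  then show ?case using ip_const[of 1] by simp
next
  case (Suc n)
  then show ?case using ip_mult[OF Suc.prems Suc.IH[OF Suc.prems]] by simp
qed

lemma ip_sum: "(\<And>i. i \<in> A \<Longrightarrow> ip (f i)) \<Longrightarrow> ip (\<lambda>x. \<Sum>i\<in>A. f i x)"
proof (induction A rule: infinite_finite_induct)
  case (infinite A)
  then show ?case using ip_const[of 0] by simp
next
  case empty
  then show ?case using ip_const[of 0] by simp
next
  case (insert a A)
  then show ?case using ip_add[of "f a" "\<lambda>x. \<Sum>i\<in>A. f i x"] by simp
qed

lemma ip_prod: "(\<And>i. i \<in> A \<Longrightarrow> ip (f i)) \<Longrightarrow> ip (\<lambda>x. \<Prod>i\<in>A. f i x)"
proof (induction A rule: infinite_finite_induct)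
  case (infinite A)
  then show ?case using ip_const[of 1] by simp
next
  case empty
  then show ?case using ip_const[of 1] by simp
next
  case (insert a A)
  then show ?case using ip_mult[of "f a" "\<lambda>x. \<Prod>i\<in>A. f i x"] by simp
qed

lemma ip_aa: "ip (\<lambda>t. aa t N K)"
proof -
  have d: "ip (\<lambda>t. dd t N K')" for K'
    unfolding dd_def cc_def
    by (intro ip_sum ip_mult ip_const_nat ip_power ip_id)
  show ?thesis unfolding aa_def
    by (cases "K = 0") (simp_all add: d ip_add ip_mult ip_id)
qed

definition QQ :: "nat \<Rightarrow> nat \<Rightarrow> real \<Rightarrow> real" where
  "QQ m i t = (\<Sum>l<2*m - 2*i - 1. (-t)^l)"

lemma QQ_eq:
  assumes "i < m"
  shows "(1 + t) * QQ m i t = 1 + t ^ (2*m - 2*i - 1)"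
proof -
  have o: "odd (2*m - 2*i - 1)" using assms by auto
  have "(1 - (-t)) * QQ m i t = 1 - (-t)^(2*m - 2*i - 1)"
    unfolding QQ_def by (rule one_diff_power_eq[symmetric])
  then show ?thesis using o by simp
qed

definition NN :: "nat \<Rightarrow> nat \<Rightarrow> real \<Rightarrow> real" where
  "NN m k t = (\<Sum>j=0..k. (-1)^(k-j) * real ((2*m-1) choose j) * aa t (m-k) (k-j)
                 * (\<Prod>i\<in>{0..k} - {j}. QQ m i t))"

lemma ip_NN: "ip (NN m k)"
proof -
  have q: "ip (QQ m i)" for i
    unfolding QQ_def[abs_def] by (intro ip_sum ip_power ip_minus ip_id)
  have "ip (\<lambda>t. NN m k t)"
    unfolding NN_def
    by (intro ip_sum ip_mult ip_prod q ip_const_nat ip_aa ip_power ip_const[of "-1", simplified])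
  then show ?thesis by simp
qed

lemma H_NN:
  assumes "k < m" "t \<noteq> 1" "t \<noteq> -1"
  shows "H m k t * (1 - t)^(2*k) = NN m k t"
proof -
  have t1: "1 - t \<noteq> 0" "1 + t \<noteq> 0" using assms by auto
  have ne: "1 + t ^ (2*m - 2*j - 1) \<noteq> 0" if "j \<le> k" for j
  proof -
    have "odd (2*m - 2*j - 1)" using that assms by auto
    then show ?thesis using odd_pow_ne assms(3) by blast
  qed
  have Pr: "(\<Prod>i=0..k. 1 + t ^ (2*m - 2*i - 1)) = (1 + t ^ (2*m - 2*j - 1)) * ((1+t)^k * (\<Prod>i\<in>{0..k} - {j}. QQ m i t))"
    if "j \<le> k" for j
  proof -
    have "(\<Prod>i=0..k. 1 + t ^ (2*m - 2*i - 1)) = (1 + t ^ (2*m - 2*j - 1)) * (\<Prod>i\<in>{0..k} - {j}. 1 + t ^ (2*m - 2*i - 1))"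
      using that by (subst prod.remove[of _ j]) auto
    also have "(\<Prod>i\<in>{0..k} - {j}. 1 + t ^ (2*m - 2*i - 1)) = (\<Prod>i\<in>{0..k} - {j}. (1 + t) * QQ m i t)"
      by (rule prod.cong) (use assms in \<open>auto simp: QQ_eq\<close>)
    also have "\<dots> = (1+t)^k * (\<Prod>i\<in>{0..k} - {j}. QQ m i t)"
      using that by (simp add: prod.distrib card_Diff_singleton)
    finally show ?thesis .
  qed
  have "H m k t * (1 - t)^(2*k) = (\<Sum>j=0..k. (\<Prod>i=0..k. 1 + t ^ (2*m - 2*i - 1)) / (1 + t) ^ k *
     ((-1) ^ (k - j) / (1 + t ^ (2*m - 2*j - 1)) * real ((2*m-1) choose j) * aa t (m-k) (k-j)))"
  proof -
    have c: "(1 - t)^(2*k) \<noteq> 0" using t1 by simp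
    have g: "P / (a * c) * S * c = P / a * S" if "c \<noteq> 0" for P a c S :: real
      using that by (simp add: field_simps)
    have "H m k t * (1 - t)^(2*k) = (\<Prod>i=0..k. 1 + t ^ (2*m - 2*i - 1)) / (1 + t) ^ k *
      (\<Sum>j=0..k. (-1) ^ (k - j) / (1 + t ^ (2*m - 2*j - 1)) * real ((2*m-1) choose j) * aa t (m-k) (k-j))"
      unfolding H_eq[OF assms(1)] by (rule g[OF c])
    then show ?thesis by (simp only: sum_distrib_left)
  qed
  also have "\<dots> = NN m k t"
    unfolding NN_def
  proof (rule sum.cong)
    fix j assume "j \<in> {0..k}"
    then have j: "j \<le> k" by simp
    show "(\<Prod>i=0..k. 1 + t ^ (2*m - 2*i - 1)) / (1 + t) ^ k *
     ((-1) ^ (k - j) / (1 + t ^ (2*m - 2*j - 1)) * real ((2*m-1) choose j) * aa t (m-k) (k-j))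
      = (-1)^(k-j) * real ((2*m-1) choose j) * aa t (m-k) (k-j) * (\<Prod>i\<in>{0..k} - {j}. QQ m i t)"
    proof -
      have g2: "a * (b * Q) / b * (s / a * c * d) = s * c * d * Q" if "a \<noteq> 0" "b \<noteq> 0" for a b Q s c d :: real
        using that by (simp add: field_simps)
      have bk: "(1 + t)^k \<noteq> 0" using t1 by simp
      show ?thesis unfolding Pr[OF j] by (rule g2[OF ne[OF j] bk])
    qed
  qed simp
  finally show ?thesis .
qed


lemma poly_step:
  fixes \<beta> :: "nat \<Rightarrow> real" and c :: real
  assumes h: "\<And>j. c + (2 * real (2*j) + 1) * (\<Sum>k<m. \<beta> k * (real (2*j) * (real (2*j) + 1))^(m-1-k)) = 0"
  shows "\<forall>k<m. \<beta> k = 0"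
proof -
  define G0 :: "real poly" where "G0 = (\<Sum>k<m. monom (\<beta> k) (m-1-k))"
  define W :: "real poly" where "W = [:0,1,1:]"
  define F where "F = [:1,2:] * pcompose G0 W"
  have pF: "poly F x = (2*x+1) * (\<Sum>k<m. \<beta> k * (x * (x + 1))^(m-1-k))" for x
    unfolding F_def G0_def W_def
    by (simp add: poly_pcompose poly_sum poly_monom algebra_simps)
  define Q where "Q = F + [:c:]"
  have Qr: "poly Q (real (2*j)) = 0" for j
    unfolding Q_def using h[of j] by (simp add: pF algebra_simps)
  have Q0: "Q = 0"
  proof (rule ccontr)
    assume "Q \<noteq> 0"
    then have fin: "finite {x. poly Q x = 0}" by (rule poly_roots_finite)
    have "range (\<lambda>j. real (2*j)) \<subseteq> {x. poly Q x = 0}" using Qr by auto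
    moreover have "infinite (range (\<lambda>j::nat. real (2*j)))"
      by (rule range_inj_infinite) (auto simp: inj_on_def)
    ultimately show False using fin finite_subset by blast
  qed
  have G00: "G0 = 0"
  proof (rule ccontr)
    assume G: "G0 \<noteq> 0"
    have dW: "degree W > 0" by (simp add: W_def)
    have pc: "pcompose G0 W \<noteq> 0" using pcompose_eq_0[OF _ dW] G by blast
    have "degree F = 1 + degree (pcompose G0 W)"
      unfolding F_def by (subst degree_mult_eq) (use pc in auto)
    moreover have "F = - [:c:]" using Q0 unfolding Q_def by (metis eq_neg_iff_add_eq_0)
    ultimately show False by simp
  qed
  show ?thesis
  proof (intro allI impI)
    fix k assume k: "k < m"
    have "coeff G0 (m-1-k) = (\<Sum>k'<m. if m-1-k' = m-1-k then \<beta> k' else 0)"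
      unfolding G0_def coeff_sum by simp
    also have "\<dots> = (\<Sum>k'<m. if k' = k then \<beta> k' else 0)"
      by (rule sum.cong) (use k in auto)
    also have "\<dots> = \<beta> k" using k by simp
    finally show "\<beta> k = 0" using G00 by simp
  qed
qed

lemma cont_eq_at:
  fixes f g :: "real \<Rightarrow> real"
  assumes "isCont f 1" "isCont g 1" "\<And>x. x \<noteq> 1 \<Longrightarrow> x \<noteq> -1 \<Longrightarrow> f x = g x"
  shows "f 1 = g 1"
proof -
  have ev: "eventually (\<lambda>x. f x = g x) (at (1::real))"
    unfolding eventually_at by (rule exI[of _ 1]) (auto simp: dist_real_def intro: assms(3))
  have f1: "(f \<longlongrightarrow> f 1) (at 1)" using assms(1) by (simp add: isCont_def)
  have g1: "(g \<longlongrightarrow> g 1) (at 1)" using assms(2) by (simp add: isCont_def)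
  have "(g \<longlongrightarrow> f 1) (at 1)" using f1 ev by (rule Lim_transform_eventually)
  then show ?thesis using g1 by (simp add: LIM_unique)
qed


abbreviation RHSstmt :: "nat \<Rightarrow> nat \<Rightarrow> real \<Rightarrow> real" where
  "RHSstmt m n t \<equiv> (-1) ^ (m + n) * H m (m - 1) t * t ^ (2*m*n - n)
              / ((1 + t) ^ m * (\<Prod>i=0..m-1. 1 + t ^ (2*m - 2*i - 1)))
          + (1 - t ^ (2*n + 1)) / (1 - t) *
            (\<Sum>k=0..m-1. (-1) ^ k * H m k t * (1 - (t^2) ^ n) ^ (m - k - 1)
                 * (1 - (t^2) ^ (n + 1)) ^ (m - k - 1) * (t^2) ^ (k * n)
               / ((1 - t^2) ^ (2*m - 2*k - 2) * (1 + t) ^ (k + 1)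
                  * (\<Prod>i=0..k. 1 + t ^ (2*m - 2*i - 1))))"

lemma stmt_ident:
  assumes "m \<ge> 1" "t \<noteq> 1" "t \<noteq> -1"
  shows "Tsq (2*m - 1) n t = RHSstmt m n t"
  unfolding main_ident[OF assms] RHS_eq[OF assms] hom_def ..

lemma mpi_poly_power: "poly (map_poly (of_int :: int \<Rightarrow> real) (p^n)) x = poly (map_poly of_int p) x ^ n"
  by (induction n) (simp_all add: mpi_mult)

lemma mpi_eval: "poly (map_poly (of_int :: int \<Rightarrow> real) p) (of_int x) = of_int (poly p x)"
  by (induction p) (simp_all add: map_poly_pCons)

lemma qint:
  assumes "1 - q \<noteq> (0::real)"
  shows "1 - q^k = (1 - q) * (\<Sum>i<k. q^i)"
  by (rule one_diff_power_eq)

lemma Tsq_poly_form: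
  assumes "t \<noteq> 1" "t \<noteq> -1"
  shows "Tsq M n t = (\<Sum>k=1..n. (-1)^(n-k) * (\<Sum>i<k. (t^2)^i)^M * t^(M*(n-k)))"
proof -
  have q: "1 - t^2 \<noteq> 0" using assms by (auto simp: power2_eq_1_iff)
  show ?thesis unfolding Tsq_def
    by (rule sum.cong) (use q in \<open>simp_all add: qint[OF q]\<close>)
qed

lemma gen5:
  assumes "c \<noteq> (0::real)"
  shows "y * (s * h * (c * N1)^a * (c * N2)^a * Z / (c^(a+a) * B1 * B2)) = s * (y * h) * N1^a * N2^a * Z / (B1 * B2)"
  using assms by (simp add: power_mult_distrib power_add field_simps)

lemma gen7: "y * (a + b * S) = y * a + b * (y * (S::real))"
  by (simp add: algebra_simps)

lemma gen6:
  assumes "a*b = c*d" shows "a*(s*b*R) = s*c*R*(d::real)"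
proof -
  have "a*(s*b*R) = s*R*(a*b)" by (simp add: mult_ac)
  also have "\<dots> = s*R*(c*d)" using assms by simp
  also have "\<dots> = s*c*R*d" by (simp add: mult_ac)
  finally show ?thesis .
qed

lemma poly_part:
  assumes m1: "m \<ge> 1"
  shows "\<forall>s<m. \<exists>p :: int poly. \<forall>x::real. x \<noteq> 1 \<and> x \<noteq> -1 \<longrightarrow>
            H m s x = poly (map_poly real_of_int p) x"
proof -
  define A :: "int poly" where "A = [:-1, 1:]"
  have "\<forall>k. \<exists>p::int poly. \<forall>x. NN m k x = poly (map_poly of_int p) x"
    using ip_NN unfolding ip_def by blast
  then obtain pk where pk: "\<And>k x. NN m k x = poly (map_poly of_int (pk k)) x" by metis
  have pA: "poly (map_poly (of_int::int\<Rightarrow>real) A) x = x - 1" for x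
    by (simp add: A_def map_poly_pCons)
  have key: "\<forall>k<m. A^(2*k) dvd pk k"
  proof (rule ccontr)
    assume "\<not> (\<forall>k<m. A^(2*k) dvd pk k)"
    then obtain k0 where k0: "k0 < m" "\<not> A^(2*k0) dvd pk k0" by blast
    define od where "od k = (if pk k = 0 then 2*k else order 1 (pk k))" for k
    define r where "r k = (if pk k = 0 then 0 else (SOME r. pk k = A^order 1 (pk k) * r \<and> \<not> A dvd r))" for k
    have dec: "pk k = A^(od k) * r k \<and> (pk k \<noteq> 0 \<longrightarrow> poly (r k) 1 \<noteq> 0)" for k
    proof (cases "pk k = 0")
      case True
      then show ?thesis by (simp add: od_def r_def)
    next
      case False
      have ex: "\<exists>r. pk k = A^order 1 (pk k) * r \<and> \<not> A dvd r"
        using order_decomp[OF False, of 1] by (simp add: A_def)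
      have "pk k = A^order 1 (pk k) * r k \<and> \<not> A dvd r k"
        unfolding r_def using False someI_ex[OF ex] by simp
      then show ?thesis using False by (simp add: od_def poly_eq_0_iff_dvd A_def)
    qed
    define e where "e k = 2*k - od k" for k
    define P where "P = Max (e ` {..<m})"
    have eP: "e k \<le> P" if "k < m" for k unfolding P_def using that by (intro Max_ge) auto
    have "P \<in> e ` {..<m}" unfolding P_def using k0 by (intro Max_in) auto
    then obtain ks where ks: "ks < m" "e ks = P" by auto
    have o0: "od k0 < 2*k0"
    proof (rule ccontr)
      assume "\<not> od k0 < 2*k0"
      then have "A^(2*k0) dvd A^(od k0)" by (intro le_imp_power_dvd) simp
      then have "A^(2*k0) dvd pk k0" using dec[of k0] by (metis dvd_mult2)
      with k0 show False by simp
    qed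
    have P0: "P > 0" using eP[OF k0(1)] o0 unfolding e_def by linarith
    have oks: "od ks < 2*ks" and eks: "P = 2*ks - od ks" using ks P0 unfolding e_def by auto
    have pks: "pk ks \<noteq> 0" using oks unfolding od_def by auto
    define g where "g k x = (-1)^(od k) * (1-x)^(P + od k - 2*k) * poly (map_poly (of_int::int\<Rightarrow>real) (r k)) x" for k x
    have gH: "(1-x)^P * H m k x = g k x" if "k < m" "x \<noteq> 1" "x \<noteq> -1" for k x
    proof -
      have ek: "2*k - od k \<le> P" using eP[OF that(1)] unfolding e_def .
      have c: "(1-x)^(2*k) \<noteq> 0" using that by simp
      have "(1-x)^P * H m k x * (1-x)^(2*k) = (1-x)^P * NN m k x"
        using H_NN[OF that] by (simp add: mult.assoc)
      also have "NN m k x = (x-1)^(od k) * poly (map_poly of_int (r k)) x"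
        unfolding pk using dec[of k] by (simp add: mpi_mult mpi_poly_power pA)
      also have "(x-1)^(od k) = (-1)^(od k) * (1-x)^(od k)"
        by (simp add: power_mult_distrib[symmetric])
      also have "(1-x)^P * ((-1)^(od k) * (1-x)^(od k) * poly (map_poly of_int (r k)) x) = g k x * (1-x)^(2*k)"
      proof -
        have "P + od k = (P + od k - 2*k) + 2*k" using ek by simp
        then have "(1-x)^P * (1-x)^(od k) = (1-x)^(P + od k - 2*k) * (1-x)^(2*k)" by (metis power_add)
        then show ?thesis unfolding g_def by (rule gen6)
      qed
      finally show ?thesis using that(2) by simp
    qed
    have g1: "g ks 1 \<noteq> 0"
    proof -
      have "P + od ks - 2*ks = 0" using eks oks by simp
      moreover have "poly (map_poly (of_int::int\<Rightarrow>real) (r ks)) 1 \<noteq> 0"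
        using mpi_eval[of "r ks" 1] dec[of ks] pks by simp
      ultimately show ?thesis unfolding g_def by simp
    qed
    have atone: "0 = (-1)^(m+n) * g (m-1) 1 / (2^m * 2^m) + (2 * real n + 1) *
       (\<Sum>k<m. (-1)^k * g k 1 * (real n * (real n + 1))^(m-1-k) / (2^(k+1) * 2^(k+1)))" for n
    proof -
      define LHS where "LHS x = (1-x)^P * (\<Sum>k=1..n. (-1)^(n-k) * (\<Sum>i<k. (x^2)^i)^(2*m-1) * x^((2*m-1)*(n-k)))" for x :: real
      define RHS where "RHS x = (-1)^(m+n) * g (m-1) x * x^(2*m*n - n) / ((1+x)^m * (\<Prod>i=0..m-1. 1 + x^(2*m-2*i-1)))
         + (\<Sum>i\<le>2*n. x^i) * (\<Sum>k<m. (-1)^k * g k x * (\<Sum>i<n. (x^2)^i)^(m-k-1) * (\<Sum>i\<le>n. (x^2)^i)^(m-k-1) * (x^2)^(k*n)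
              / ((1+x)^(k+1) * (\<Prod>i=0..k. 1 + x^(2*m-2*i-1))))" for x :: real
      have eq: "LHS x = RHS x" if x: "x \<noteq> 1" "x \<noteq> -1" for x
      proof -
        have q: "1 - x^2 \<noteq> 0" using x by (auto simp: power2_eq_1_iff)
        have x1: "1 - x \<noteq> 0" using x by simp
        have I: "{0..m-1} = {..<m}" using m1 by auto
        have h1: "(1-x)^P * ((-1)^(m+n) * H m (m-1) x * x^(2*m*n-n) / D) = (-1)^(m+n) * g (m-1) x * x^(2*m*n-n) / D" for D
          using gH[of "m-1" x] m1 x by (simp add: algebra_simps)
        have h2: "(1 - x^(2*n+1))/(1-x) = (\<Sum>i\<le>2*n. x^i)"
          using sum_gp_basic[of x "2*n"] x1 by (simp add: field_simps)
        have h3: "(1-x)^P * ((-1)^k * H m k x * (1 - (x^2)^n)^(m-k-1) * (1 - (x^2)^(n+1))^(m-k-1) * (x^2)^(k*n)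
                   / ((1-x^2)^(2*m-2*k-2) * (1+x)^(k+1) * (\<Prod>i=0..k. 1 + x^(2*m-2*i-1))))
                = (-1)^k * g k x * (\<Sum>i<n. (x^2)^i)^(m-k-1) * (\<Sum>i\<le>n. (x^2)^i)^(m-k-1) * (x^2)^(k*n)
                   / ((1+x)^(k+1) * (\<Prod>i=0..k. 1 + x^(2*m-2*i-1)))" if k: "k < m" for k
        proof -
          have e1: "1 - (x^2)^n = (1 - x^2) * (\<Sum>i<n. (x^2)^i)" by (rule qint[OF q])
          have e2: "1 - (x^2)^(n+1) = (1 - x^2) * (\<Sum>i\<le>n. (x^2)^i)"
            using qint[OF q, of "n+1"] by (simp add: lessThan_Suc_atMost)
          have e3: "2*m-2*k-2 = (m-k-1) + (m-k-1)" using k by simp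
          show ?thesis unfolding e1 e2 e3 gen5[OF q] gH[OF k x] ..
        qed
        have "LHS x = (1-x)^P * RHSstmt m n x"
          unfolding LHS_def Tsq_poly_form[OF x, symmetric] stmt_ident[OF m1 x] ..
        also have "\<dots> = RHS x"
        proof -
          have S: "(1-x)^P * (\<Sum>k=0..m-1. (-1) ^ k * H m k x * (1 - (x^2) ^ n) ^ (m - k - 1)
                 * (1 - (x^2) ^ (n + 1)) ^ (m - k - 1) * (x^2) ^ (k * n)
               / ((1 - x^2) ^ (2*m - 2*k - 2) * (1 + x) ^ (k + 1)
                  * (\<Prod>i=0..k. 1 + x ^ (2*m - 2*i - 1))))
             = (\<Sum>k<m. (-1)^k * g k x * (\<Sum>i<n. (x^2)^i)^(m-k-1) * (\<Sum>i\<le>n. (x^2)^i)^(m-k-1) * (x^2)^(k*n)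
              / ((1+x)^(k+1) * (\<Prod>i=0..k. 1 + x^(2*m-2*i-1))))"
            unfolding sum_distrib_left I by (intro sum.cong refl h3) simp
          show ?thesis unfolding gen7 h1 h2 S RHS_def ..
        qed
        finally show ?thesis .
      qed
      have c1: "isCont LHS 1" unfolding LHS_def by (intro continuous_intros)
      have c2: "isCont RHS 1" unfolding RHS_def g_def by (intro continuous_intros) (simp_all add: prod_zero_iff)
      have "LHS 1 = RHS 1" by (rule cont_eq_at[OF c1 c2 eq])
      moreover have "LHS 1 = 0" unfolding LHS_def using P0 by simp
      moreover have "RHS 1 = (-1)^(m+n) * g (m-1) 1 / (2^m * 2^m) + (2 * real n + 1) *
         (\<Sum>k<m. (-1)^k * g k 1 * (real n * (real n + 1))^(m-1-k) / (2^(k+1) * 2^(k+1)))"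
      proof -
        have s1: "(\<Sum>i\<le>2*n. (1::real)^i) = 2 * real n + 1" by simp
        have s2: "(\<Sum>i<n. ((1::real)^2)^i) = real n" by simp
        have s3: "(\<Sum>i\<le>n. ((1::real)^2)^i) = real n + 1" by simp
        have s4: "(\<Prod>i=0..k. 1 + (1::real)^(2*m-2*i-1)) = 2^(k+1)" for k by simp
        have s5: "(1 + (1::real))^j = 2^j" for j by simp
        have s6: "(2::real)^(m-1+1) = 2^m" using m1 by simp
        show ?thesis unfolding RHS_def s1 s2 s3 s4 s5 s6
          by (intro arg_cong2[where f="(+)"] arg_cong2[where f="(*)"] refl sum.cong)
             (simp_all add: power_mult_distrib)
      qed
      ultimately show ?thesis by simp
    qed
    define \<beta> where "\<beta> k = (-1)^k * g k 1 / 4^(k+1)" for k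
    define c where "c = (-1)^m * g (m-1) 1 / 4^m"
    have "\<forall>k<m. \<beta> k = 0"
    proof (rule poly_step)
      fix j
      have "0 = (-1)^(m+2*j) * g (m-1) 1 / (2^m * 2^m) + (2 * real (2*j) + 1) *
       (\<Sum>k<m. (-1)^k * g k 1 * (real (2*j) * (real (2*j) + 1))^(m-1-k) / (2^(k+1) * 2^(k+1)))"
        using atone[of "2*j"] by simp
      also have "(-1)^(m+2*j) * g (m-1) 1 / (2^m * 2^m) = c"
        unfolding c_def by (simp add: power_add power_mult_distrib[symmetric])
      also have "(\<Sum>k<m. (-1)^k * g k 1 * (real (2*j) * (real (2*j) + 1))^(m-1-k) / (2^(k+1) * 2^(k+1)))
          = (\<Sum>k<m. \<beta> k * (real (2*j) * (real (2*j) + 1))^(m-1-k))"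
        unfolding \<beta>_def by (rule sum.cong) (simp_all add: power_mult_distrib[symmetric])
      finally show "c + (2 * real (2*j) + 1) * (\<Sum>k<m. \<beta> k * (real (2*j) * (real (2*j) + 1))^(m-1-k)) = 0"
        by simp
    qed
    then have "g ks 1 = 0" using ks(1) unfolding \<beta>_def by simp
    with g1 show False by simp
  qed
  show ?thesis
  proof (intro allI impI)
    fix s assume s: "s < m"
    obtain r where r: "pk s = A^(2*s) * r" using key s by (auto elim: dvdE)
    show "\<exists>p. \<forall>x. x \<noteq> 1 \<and> x \<noteq> -1 \<longrightarrow> H m s x = poly (map_poly real_of_int p) x"
    proof (intro exI[of _ r] allI impI)
      fix x :: real assume x: "x \<noteq> 1 \<and> x \<noteq> -1"
      have "H m s x * (1-x)^(2*s) = NN m s x" using H_NN[OF s] x by auto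
      also have "\<dots> = (x-1)^(2*s) * poly (map_poly of_int r) x"
        unfolding pk r by (simp add: mpi_mult mpi_poly_power pA)
      also have "(x-1)^(2*s) = (1-x)^(2*s)" by (simp add: power_mult power2_commute)
      finally have "H m s x * (1-x)^(2*s) = poly (map_poly real_of_int r) x * (1-x)^(2*s)" by simp
      moreover have "(1-x)^(2*s) \<noteq> 0" using x by simp
      ultimately show "H m s x = poly (map_poly real_of_int r) x" using x by simp
    qed
  qed
qed

theorem theorem1p4:
  fixes m n :: nat
  assumes "m \<ge> 1" and "n \<ge> 1"
  shows "(\<forall>s<m. \<exists>p :: int poly. \<forall>x::real. x \<noteq> 1 \<and> x \<noteq> -1 \<longrightarrow>
            H m s x = poly (map_poly real_of_int p) x)
     \<and> (\<forall>t::real. t \<noteq> 1 \<and> t \<noteq> -1 \<longrightarrow>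
          Tsq (2*m - 1) n t =
            (-1) ^ (m + n) * H m (m - 1) t * t ^ (2*m*n - n)
              / ((1 + t) ^ m * (\<Prod>i=0..m-1. 1 + t ^ (2*m - 2*i - 1)))
          + (1 - t ^ (2*n + 1)) / (1 - t) *
            (\<Sum>k=0..m-1. (-1) ^ k * H m k t * (1 - (t^2) ^ n) ^ (m - k - 1)
                 * (1 - (t^2) ^ (n + 1)) ^ (m - k - 1) * (t^2) ^ (k * n)
               / ((1 - t^2) ^ (2*m - 2*k - 2) * (1 + t) ^ (k + 1)
                  * (\<Prod>i=0..k. 1 + t ^ (2*m - 2*i - 1)))))"
  using poly_part[OF assms(1)] stmt_ident[OF assms(1)] by blast

end
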